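(* Let $\mathcal H$ be a complex Hilbert space, let $\mathbf A=(A_1,\dots,A_m)$ be an $m$-tuple of bounded self-adjoint operators on $\mathcal H$, and let $k$ be a positive integer. If $\operatorname{cl}(\Lambda_{\hat k}(\mathbf A))\neq\emptyset$ for some integer $\hat k\ge(m+2)k$, then $\operatorname{cl}(\Lambda_k(\mathbf A))$ is star-shaped and contains the convex set $\operatorname{conv}\operatorname{cl}(\Lambda_{\hat k}(\mathbf A))$, and every element of $\operatorname{conv}\operatorname{cl}(\Lambda_{\hat k}(\mathbf A))$ is a star center of $\operatorname{cl}(\Lambda_k(\mathbf A))$.
   Context: For an $m$-tuple $\mathbf A=(A_1,\dots,A_m)$ of bounded self-adjoint operators on a complex Hilbert space $\mathcal H$ and a positive integer $k$, the joint rank-$k$ numerical range is $\Lambda_k(\mathbf A)=\{(a_1,\dots,a_m)\in\mathbb R^m:$ there is an orthogonal projection $P$ of rank $k$ on $\mathcal H$ with $PA_jP=a_jP$ for $j=1,\dots,m\}$. $\operatorname{cl}$ denotes closure in $\mathbb R^m$ and $\operatorname{conv}$ convex hull. A set $S\subseteq\mathbb R^m$ is star-shaped with star center $\mathbf c\in S$ if for every $\mathbf b\in S$ the line segment joining $\mathbf c$ and $\mathbf b$ lies in $S$. *)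

theory Defs
  imports "HOL-Analysis.Analysis"
begin

class complex_vector = real_vector +
  fixes scaleC :: "complex \<Rightarrow> 'a \<Rightarrow> 'a" (infixr "*\<^sub>C" 75)
  assumes scaleC_add_right: "scaleC a (x + y) = scaleC a x + scaleC a y"
    and scaleC_add_left: "scaleC (a + b) x = scaleC a x + scaleC b x"
    and scaleC_scaleC: "scaleC a (scaleC b x) = scaleC (a * b) x"
    and scaleC_one: "scaleC 1 x = x"
    and scaleR_scaleC: "scaleR r x = scaleC (complex_of_real r) x"

class complex_inner = complex_vector + real_normed_vector +
  fixes cinner :: "'a \<Rightarrow> 'a \<Rightarrow> complex"
  assumes cinner_commute: "cinner x y = cnj (cinner y x)"
    and cinner_add_left: "cinner (x + y) z = cinner x z + cinner y z"
    and cinner_scaleC_left: "cinner (scaleC r x) y = cnj r * cinner x y"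
    and cinner_self_real_nonneg: "Im (cinner x x) = 0 \<and> 0 \<le> Re (cinner x x)"
    and cinner_eq_zero_iff: "cinner x x = 0 \<longleftrightarrow> x = 0"
    and norm_eq_sqrt_cinner: "norm x = sqrt (Re (cinner x x))"

text \<open>A complex Hilbert space is a type of class complex_inner together with complete_space.\<close>

definition clinear :: "('a::complex_vector \<Rightarrow> 'b::complex_vector) \<Rightarrow> bool" where
  "clinear T \<longleftrightarrow> (\<forall>x y. T (x + y) = T x + T y) \<and> (\<forall>c x. T (c *\<^sub>C x) = c *\<^sub>C T x)"

definition bounded_clinear_op :: "('a::complex_inner \<Rightarrow> 'a) \<Rightarrow> bool" where
  "bounded_clinear_op T \<longleftrightarrow> clinear T \<and> (\<exists>K. \<forall>x. norm (T x) \<le> K * norm x)"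

definition selfadjoint_op :: "('a::complex_inner \<Rightarrow> 'a) \<Rightarrow> bool" where
  "selfadjoint_op T \<longleftrightarrow> bounded_clinear_op T \<and> (\<forall>x y. cinner (T x) y = cinner x (T y))"

definition cspan_fin :: "'a::complex_vector set \<Rightarrow> 'a set" where
  "cspan_fin B = {\<Sum>b\<in>B. c b *\<^sub>C b | c. True}"

definition cindependent_fin :: "'a::complex_vector set \<Rightarrow> bool" where
  "cindependent_fin B \<longleftrightarrow> (\<forall>c. (\<Sum>b\<in>B. c b *\<^sub>C b) = 0 \<longrightarrow> (\<forall>b\<in>B. c b = 0))"

definition rank_proj :: "nat \<Rightarrow> ('a::complex_inner \<Rightarrow> 'a) \<Rightarrow> bool" where
  "rank_proj k P \<longleftrightarrow> selfadjoint_op P \<and> (\<forall>x. P (P x) = P x) \<and>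
     (\<exists>B. finite B \<and> card B = k \<and> cindependent_fin B \<and> range P = cspan_fin B)"

text \<open>Joint rank-k numerical range of an m-tuple of operators (m = CARD('m)).\<close>
definition joint_rank_k_nr :: "nat \<Rightarrow> ('m::finite \<Rightarrow> 'a::complex_inner \<Rightarrow> 'a) \<Rightarrow> (real^'m) set" where
  "joint_rank_k_nr k A = {a. \<exists>P. rank_proj k P \<and>
      (\<forall>j x. P (A j (P x)) = complex_of_real (a $ j) *\<^sub>C P x)}"

definition star_center :: "'a::real_vector set \<Rightarrow> 'a \<Rightarrow> bool" where
  "star_center S c \<longleftrightarrow> c \<in> S \<and> (\<forall>b\<in>S. closed_segment c b \<subseteq> S)"

definition star_shaped :: "'a::real_vector set \<Rightarrow> bool" where
  "star_shaped S \<longleftrightarrow> (\<exists>c. star_center S c)"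

end

theory Submission
  imports Defs
begin


lemma cinner_zero_left[simp]: "cinner 0 y = 0"
proof -
  have "cinner (0+0) y = cinner 0 y + cinner 0 y" by (rule cinner_add_left)
  thus ?thesis by simp
qed

lemma cinner_zero_right[simp]: "cinner x 0 = 0"
  by (metis cinner_commute cinner_zero_left complex_cnj_zero)

lemma cinner_add_right: "cinner x (y + z) = cinner x y + cinner x z"
  by (metis cinner_add_left cinner_commute complex_cnj_add)

lemma cinner_scaleC_right: "cinner x (a *\<^sub>C y) = a * cinner x y"
  by (metis cinner_commute cinner_scaleC_left complex_cnj_cnj complex_cnj_mult)

lemma cinner_diff_right: "cinner x (y - z) = cinner x y - cinner x z"
  by (metis add_diff_cancel_right' cinner_add_right diff_add_cancel)

lemma cinner_sum_right: "cinner x (sum f S) = (\<Sum>i\<in>S. cinner x (f i))"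
  by (induction S rule: infinite_finite_induct) (auto simp: cinner_add_right)

lemma cinner_sum_left: "cinner (sum f S) x = (\<Sum>i\<in>S. cinner (f i) x)"
  by (induction S rule: infinite_finite_induct) (auto simp: cinner_add_left)

lemma scaleC_zero_left[simp]: "0 *\<^sub>C x = 0"
  by (metis of_real_0 scaleR_scaleC scaleR_zero_left)

lemma scaleC_zero_right[simp]: "a *\<^sub>C 0 = 0"
  by (metis add_cancel_right_right scaleC_add_right)

lemma scaleC_sum_right: "a *\<^sub>C sum f S = (\<Sum>i\<in>S. a *\<^sub>C f i)"
  by (induction S rule: infinite_finite_induct) (auto simp: scaleC_add_right)

lemma clinear_zero: "clinear T \<Longrightarrow> T 0 = 0"
proof -
  assume "clinear T"
  hence "T (0 *\<^sub>C 0) = 0 *\<^sub>C T 0" unfolding clinear_def by blast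
  thus ?thesis by simp
qed

lemma clinear_sum: "clinear T \<Longrightarrow> T (sum f S) = (\<Sum>i\<in>S. T (f i))"
  apply (induction S rule: infinite_finite_induct)
  by (auto simp: clinear_zero) (simp add: clinear_def)

lemma clinear_scaleC: "clinear T \<Longrightarrow> T (a *\<^sub>C x) = a *\<^sub>C T x"
  unfolding clinear_def by auto

lemma clinear_add: "clinear T \<Longrightarrow> T (x + y) = T x + T y"
  unfolding clinear_def by auto

lemma homog:
  fixes M :: "'r \<Rightarrow> 'i \<Rightarrow> 'f::field"
  assumes "finite R"
  shows "finite I \<Longrightarrow> card R < card I \<Longrightarrow> \<exists>c. (\<exists>i\<in>I. c i \<noteq> 0) \<and> (\<forall>r\<in>R. (\<Sum>i\<in>I. M r i * c i) = 0)"
  using assms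
proof (induction R arbitrary: I M rule: finite_induct)
  case empty
  then show ?case by (intro exI[of _ "\<lambda>_. 1"]) (auto simp: card_gt_0_iff)
next
  case (insert r0 R I M)
  show ?case
  proof (cases "\<forall>i\<in>I. M r0 i = 0")
    case True
    from insert.IH[of I M] insert.prems insert.hyps obtain c where
      "(\<exists>i\<in>I. c i \<noteq> 0)" "\<forall>r\<in>R. (\<Sum>i\<in>I. M r i * c i) = 0" by auto
    then show ?thesis using True by (intro exI[of _ c]) auto
  next
    case False
    then obtain p where p: "p \<in> I" "M r0 p \<noteq> 0" by auto
    define I' where "I' = I - {p}"
    define M' where "M' = (\<lambda>r i. M r i - M r p * M r0 i / M r0 p)"
    have fI': "finite I'" using insert.prems unfolding I'_def by auto
    have cI': "card R < card I'" using insert.prems insert.hyps p unfolding I'_def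
      by (simp add: card_Diff_singleton)
    from insert.IH[OF fI' cI', of M'] obtain c' where
      c': "(\<exists>i\<in>I'. c' i \<noteq> 0)" "\<forall>r\<in>R. (\<Sum>i\<in>I'. M' r i * c' i) = 0" by auto
    define S where "S = (\<Sum>i\<in>I'. M r0 i * c' i)"
    define c where "c = (\<lambda>i. if i = p then - S / M r0 p else c' i)"
    have split: "(\<Sum>i\<in>I. M r i * c i) = M r p * c p + (\<Sum>i\<in>I'. M r i * c' i)" for r
    proof -
      have "(\<Sum>i\<in>I. M r i * c i) = M r p * c p + (\<Sum>i\<in>I'. M r i * c i)"
        unfolding I'_def using p insert.prems by (simp add: sum.remove)
      moreover have "(\<Sum>i\<in>I'. M r i * c i) = (\<Sum>i\<in>I'. M r i * c' i)"
        by (rule sum.cong) (auto simp: c_def I'_def)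
      ultimately show ?thesis by simp
    qed
    have "\<exists>i\<in>I. c i \<noteq> 0" using c'(1) unfolding c_def I'_def by auto
    moreover have "(\<Sum>i\<in>I. M r0 i * c i) = 0"
      unfolding split S_def[symmetric] using p by (simp add: c_def)
    moreover have "(\<Sum>i\<in>I. M r i * c i) = 0" if "r \<in> R" for r
    proof -
      have "(\<Sum>i\<in>I. M r i * c i) = M r p * (- S / M r0 p) + (\<Sum>i\<in>I'. M r i * c' i)"
        unfolding split by (simp add: c_def)
      also have "\<dots> = (\<Sum>i\<in>I'. M' r i * c' i)"
        unfolding M'_def S_def using p
        by (simp add: algebra_simps sum_subtractf sum_distrib_left sum_divide_distrib)
      also have "\<dots> = 0" using c'(2) that by auto
      finally show ?thesis .
    qed
    ultimately show ?thesis by (intro exI[of _ c]) auto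
  qed
qed



lemma exists_perp:
  fixes B V :: "'a::complex_inner set"
  assumes "finite B" "cindependent_fin B" "finite V" "card V < card B"
  shows "\<exists>x \<in> cspan_fin B. x \<noteq> 0 \<and> (\<forall>v\<in>V. cinner v x = 0)"
proof -
  obtain c where c: "\<exists>b\<in>B. c b \<noteq> 0" "\<forall>v\<in>V. (\<Sum>b\<in>B. cinner v b * c b) = 0"
    using homog[OF assms(3) assms(1) assms(4), of cinner] by auto
  define x where "x = (\<Sum>b\<in>B. c b *\<^sub>C b)"
  have "x \<in> cspan_fin B" unfolding x_def cspan_fin_def by auto
  moreover have "x \<noteq> 0" using assms(2) c(1) unfolding cindependent_fin_def x_def by auto
  moreover have "cinner v x = 0" if "v \<in> V" for v
    using c(2) that unfolding x_def by (simp add: cinner_sum_right cinner_scaleC_right mult.commute)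
  ultimately show ?thesis by blast
qed

definition orthonormal :: "(nat \<Rightarrow> 'a::complex_inner) \<Rightarrow> nat \<Rightarrow> bool" where
  "orthonormal x k \<longleftrightarrow> (\<forall>i<k. \<forall>l<k. cinner (x i) (x l) = (if i = l then 1 else 0))"

definition oproj :: "(nat \<Rightarrow> 'a::complex_inner) \<Rightarrow> nat \<Rightarrow> 'a \<Rightarrow> 'a" where
  "oproj x k y = (\<Sum>i<k. cinner (x i) y *\<^sub>C x i)"

lemma oproj_clinear: "clinear (oproj x k)"
  unfolding clinear_def oproj_def
  by (auto simp: cinner_add_right scaleC_add_left sum.distrib cinner_scaleC_right
      scaleC_sum_right scaleC_scaleC)

lemma oproj_adj: "cinner (oproj x k y) z = cinner y (oproj x k z)"
  unfolding oproj_def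
  by (auto simp: cinner_sum_left cinner_sum_right cinner_scaleC_left cinner_scaleC_right
      intro!: sum.cong) (metis cinner_commute mult.commute)

lemma oproj_basis: assumes "orthonormal x k" "l < k" shows "oproj x k (x l) = x l"
proof -
  have "oproj x k (x l) = (\<Sum>i<k. (if i = l then x l else 0))"
    unfolding oproj_def using assms unfolding orthonormal_def by (intro sum.cong) (auto simp: scaleC_one)
  also have "\<dots> = x l" using assms(2) by simp
  finally show ?thesis .
qed

lemma oproj_idem: assumes "orthonormal x k" shows "oproj x k (oproj x k y) = oproj x k y"
proof -
  have "oproj x k (oproj x k y) = (\<Sum>i<k. cinner (x i) y *\<^sub>C oproj x k (x i))"
    by (subst (2) oproj_def) (simp add: clinear_sum[OF oproj_clinear] clinear_scaleC[OF oproj_clinear])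
  also have "\<dots> = oproj x k y" unfolding oproj_def
    using oproj_basis[OF assms] by (intro sum.cong) (auto simp: oproj_def)
  finally show ?thesis .
qed

lemma selfadj_idem_bounded:
  assumes adj: "\<And>y z. cinner (P y) z = cinner y (P z)" and idem: "\<And>y. P (P y) = P y"
  shows "norm (P y) \<le> norm (y::'a::complex_inner)"
proof -
  define r where "r = y - P y"
  have y: "y = P y + r" unfolding r_def by simp
  have h1: "cinner (P y) r = 0" unfolding r_def cinner_diff_right
    by (metis adj idem cinner_commute diff_self) 
  have h2: "cinner r (P y) = 0" by (metis h1 cinner_commute complex_cnj_zero)
  have "cinner y y = cinner (P y) (P y) + cinner r r"
    by (subst (1 2) y) (simp add: cinner_add_left cinner_add_right h1 h2)
  hence "Re (cinner y y) = Re (cinner (P y) (P y)) + Re (cinner r r)" by simp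
  hence "Re (cinner (P y) (P y)) \<le> Re (cinner y y)" using cinner_self_real_nonneg[of r] by linarith
  thus ?thesis by (simp add: norm_eq_sqrt_cinner)
qed

lemma orthonormal_inj: assumes "orthonormal x k" shows "inj_on x {..<k}"
  using assms unfolding orthonormal_def inj_on_def
  by (metis lessThan_iff one_neq_zero)

lemma oproj_rank: assumes "orthonormal x k" shows "rank_proj k (oproj x k)"
proof -
  have sa: "selfadjoint_op (oproj x k)"
    unfolding selfadjoint_op_def bounded_clinear_op_def
    using oproj_clinear oproj_adj selfadj_idem_bounded[OF oproj_adj oproj_idem[OF assms]]
    by (metis mult_1)
  let ?B = "x ` {..<k}"
  have inj: "inj_on x {..<k}" by (rule orthonormal_inj[OF assms])
  have card: "card ?B = k" using inj by (simp add: card_image)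
  have ind: "cindependent_fin ?B" unfolding cindependent_fin_def
  proof (intro allI impI ballI)
    fix c b assume s: "(\<Sum>b\<in>?B. c b *\<^sub>C b) = 0" and b: "b \<in> ?B"
    then obtain l where l: "l < k" "b = x l" by auto
    have "0 = cinner b (\<Sum>b\<in>?B. c b *\<^sub>C b)" using s by simp
    also have "\<dots> = (\<Sum>i<k. c (x i) * cinner (x l) (x i))"
      by (simp add: sum.reindex[OF inj] cinner_sum_right cinner_scaleC_right l)
    also have "\<dots> = (\<Sum>i<k. if i = l then c (x l) else 0)"
      using assms l unfolding orthonormal_def by (intro sum.cong) auto
    also have "\<dots> = c b" using l by simp
    finally show "c b = 0" by simp
  qed
  have rng: "range (oproj x k) = cspan_fin ?B"
  proof
    show "range (oproj x k) \<subseteq> cspan_fin ?B"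
    proof
      fix z assume "z \<in> range (oproj x k)"
      then obtain y where y: "z = oproj x k y" by auto
      have "z = (\<Sum>b\<in>?B. cinner b y *\<^sub>C b)"
        unfolding y oproj_def by (simp add: sum.reindex[OF inj])
      hence "\<exists>c. z = (\<Sum>b\<in>?B. c b *\<^sub>C b) \<and> True" by (intro exI[of _ "\<lambda>b. cinner b y"]) simp
      thus "z \<in> cspan_fin ?B" unfolding cspan_fin_def by simp
    qed
  next
    show "cspan_fin ?B \<subseteq> range (oproj x k)"
    proof
      fix z assume "z \<in> cspan_fin ?B"
      then obtain c where z: "z = (\<Sum>b\<in>?B. c b *\<^sub>C b)" unfolding cspan_fin_def by auto
      have "oproj x k z = (\<Sum>b\<in>?B. c b *\<^sub>C oproj x k b)"
        unfolding z by (simp add: clinear_sum[OF oproj_clinear] clinear_scaleC[OF oproj_clinear])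
      also have "\<dots> = z" unfolding z using oproj_basis[OF assms] by (intro sum.cong) auto
      finally show "z \<in> range (oproj x k)" by (metis rangeI)
    qed
  qed
  show ?thesis unfolding rank_proj_def
    using sa oproj_idem[OF assms] card ind rng by blast
qed

lemma from_ortho:
  fixes A :: "'m::finite \<Rightarrow> 'a::complex_inner \<Rightarrow> 'a"
  assumes "orthonormal x k" "\<And>j. clinear (A j)"
    and comp: "\<And>j i l. i < k \<Longrightarrow> l < k \<Longrightarrow> cinner (x i) (A j (x l)) = (if i = l then complex_of_real (a $ j) else 0)"
  shows "a \<in> joint_rank_k_nr k A"
  unfolding joint_rank_k_nr_def
proof (intro CollectI exI conjI allI)
  show "rank_proj k (oproj x k)" by (rule oproj_rank[OF assms(1)])
  fix j y
  have "oproj x k (A j (oproj x k y)) = (\<Sum>i<k. cinner (x i) (\<Sum>l<k. cinner (x l) y *\<^sub>C A j (x l)) *\<^sub>C x i)"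
    unfolding oproj_def[of x k "A j _"] by (simp add: oproj_def clinear_sum[OF assms(2)] clinear_scaleC[OF assms(2)])
  also have "\<dots> = (\<Sum>i<k. (complex_of_real (a $ j) * cinner (x i) y) *\<^sub>C x i)"
  proof (intro sum.cong refl)
    fix i assume i: "i \<in> {..<k}"
    have "cinner (x i) (\<Sum>l<k. cinner (x l) y *\<^sub>C A j (x l)) = (\<Sum>l<k. if l = i then cinner (x i) y * complex_of_real (a $ j) else 0)"
      using i comp unfolding cinner_sum_right by (intro sum.cong) (auto simp: cinner_scaleC_right)
    also have "\<dots> = complex_of_real (a $ j) * cinner (x i) y" using i by simp
    finally show "cinner (x i) (\<Sum>l<k. cinner (x l) y *\<^sub>C A j (x l)) *\<^sub>C x i = (complex_of_real (a $ j) * cinner (x i) y) *\<^sub>C x i" by simp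
  qed
  also have "\<dots> = complex_of_real (a $ j) *\<^sub>C oproj x k y"
    unfolding oproj_def by (simp add: scaleC_sum_right scaleC_scaleC)
  finally show "oproj x k (A j (oproj x k y)) = complex_of_real (a $ j) *\<^sub>C oproj x k y" .
qed



lemma range_fix: "(\<forall>x. P (P x) = P x) \<Longrightarrow> u \<in> range P \<Longrightarrow> P u = u"
  by auto

lemma normalize_exists:
  fixes x :: "'a::complex_inner"
  assumes "x \<noteq> 0"
  shows "\<exists>a. cinner (complex_of_real a *\<^sub>C x) (complex_of_real a *\<^sub>C x) = 1"
proof -
  define r where "r = Re (cinner x x)"
  have im: "Im (cinner x x) = 0" and ge: "r \<ge> 0" using cinner_self_real_nonneg[of x] r_def by auto
  have xx: "cinner x x = complex_of_real r" using im r_def by (simp add: complex_eq_iff)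
  have "r \<noteq> 0" using assms cinner_eq_zero_iff[of x] xx by auto
  hence rp: "r > 0" using ge by auto
  define a where "a = 1 / sqrt r"
  have "a * a * r = 1" unfolding a_def using rp by (simp add: field_simps)
  hence "cinner (complex_of_real a *\<^sub>C x) (complex_of_real a *\<^sub>C x) = 1"
  proof -
    have "cinner (complex_of_real a *\<^sub>C x) (complex_of_real a *\<^sub>C x) = complex_of_real a * complex_of_real a * complex_of_real r"
      by (simp add: cinner_scaleC_left cinner_scaleC_right xx)
    also have "\<dots> = complex_of_real (a * a * r)" by simp
    finally show ?thesis using \<open>a * a * r = 1\<close> by simp
  qed
  thus ?thesis by blast
qed

lemma build_ortho:
  fixes P :: "'a::complex_inner \<Rightarrow> 'a"
  assumes rp: "rank_proj n P" and fV: "finite V"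
  shows "card V + k \<le> n \<Longrightarrow> \<exists>u. orthonormal u k \<and> (\<forall>i<k. u i \<in> range P \<and> (\<forall>v\<in>V. cinner v (u i) = 0))"
proof (induction k)
  case 0
  then show ?case by (auto simp: orthonormal_def)
next
  case (Suc k)
  then obtain u where u: "orthonormal u k" "\<forall>i<k. u i \<in> range P \<and> (\<forall>v\<in>V. cinner v (u i) = 0)" by auto
  obtain B where B: "finite B" "card B = n" "cindependent_fin B" "range P = cspan_fin B"
    using rp unfolding rank_proj_def by auto
  have cl: "clinear P" using rp unfolding rank_proj_def selfadjoint_op_def bounded_clinear_op_def by auto
  define V' where "V' = V \<union> u ` {..<k}"
  have fV': "finite V'" using fV unfolding V'_def by auto
  have "card (u ` {..<k}) \<le> k" using card_image_le[of "{..<k}" u] by simp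
  hence "card V' \<le> card V + k" unfolding V'_def using card_Un_le[of V "u ` {..<k}"] by linarith
  hence cV': "card V' < card B" using Suc.prems B(2) by linarith
  obtain x where x: "x \<in> cspan_fin B" "x \<noteq> 0" "\<forall>v\<in>V'. cinner v x = 0"
    using exists_perp[OF B(1) B(3) fV' cV'] by auto
  obtain a where a: "cinner (complex_of_real a *\<^sub>C x) (complex_of_real a *\<^sub>C x) = 1"
    using normalize_exists[OF x(2)] by auto
  define y where "y = complex_of_real a *\<^sub>C x"
  have yP: "y \<in> range P"
  proof -
    obtain z where "x = P z" using x(1) B(4) by (metis rangeE)
    hence "y = P (complex_of_real a *\<^sub>C z)" unfolding y_def using clinear_scaleC[OF cl] by simp
    thus ?thesis by simp
  qed
  have yperp: "cinner v y = 0" if "v \<in> V'" for v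
    using x(3) that unfolding y_def by (simp add: cinner_scaleC_right)
  have yperp2: "cinner y v = 0" if "v \<in> V'" for v
    by (metis yperp[OF that] cinner_commute complex_cnj_zero)
  define u' where "u' = u(k := y)"
  have "orthonormal u' (Suc k)"
    unfolding orthonormal_def
  proof (intro allI impI)
    fix i l assume i: "i < Suc k" and l: "l < Suc k"
    show "cinner (u' i) (u' l) = (if i = l then 1 else 0)"
    proof (cases "i = k"; cases "l = k")
      assume "i = k" "l = k" thus ?thesis using a by (simp add: u'_def y_def)
    next
      assume "i = k" "l \<noteq> k" thus ?thesis using l yperp2[of "u l"] by (simp add: u'_def V'_def)
    next
      assume "i \<noteq> k" "l = k" thus ?thesis using i yperp[of "u i"] by (simp add: u'_def V'_def)
    next
      assume "i \<noteq> k" "l \<noteq> k" thus ?thesis using i l u(1) by (simp add: u'_def orthonormal_def)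
    qed
  qed
  moreover have "\<forall>i<Suc k. u' i \<in> range P \<and> (\<forall>v\<in>V. cinner v (u' i) = 0)"
    using u(2) yP yperp unfolding u'_def V'_def by (auto simp: less_Suc_eq)
  ultimately show ?case by blast
qed

lemma comp_range:
  assumes rp: "rank_proj n P" and c: "\<forall>x. P (A (P x)) = c *\<^sub>C P x"
    and u: "u \<in> range P" and w: "w \<in> range P"
  shows "cinner u (A w) = c * cinner u w"
proof -
  have idem: "\<forall>x. P (P x) = P x" and adj: "\<forall>x y. cinner (P x) y = cinner x (P y)"
    using rp unfolding rank_proj_def selfadjoint_op_def by auto
  have pu: "P u = u" by (rule range_fix[OF idem u])
  have pw: "P w = w" by (rule range_fix[OF idem w])
  have "cinner u (A w) = cinner (P u) (A (P w))" by (simp only: pu pw)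
  also have "\<dots> = cinner u (P (A (P w)))" using adj by blast
  also have "\<dots> = cinner u (c *\<^sub>C P w)" using c by simp
  also have "\<dots> = c * cinner u w" by (simp add: cinner_scaleC_right pw)
  finally show ?thesis .
qed

lemma cinner_expand:
  "cinner (complex_of_real a *\<^sub>C p + complex_of_real b *\<^sub>C q) (complex_of_real a *\<^sub>C r + complex_of_real b *\<^sub>C s)
   = complex_of_real (a*a) * cinner p r + complex_of_real (a*b) * cinner p s
     + complex_of_real (a*b) * cinner q r + complex_of_real (b*b) * cinner q s"
  by (simp add: cinner_add_left cinner_add_right cinner_scaleC_left cinner_scaleC_right) (simp add: algebra_simps)



lemma seg:
  fixes A :: "'m::finite \<Rightarrow> 'a::complex_inner \<Rightarrow> 'a"
  assumes sa: "\<And>j. selfadjoint_op (A j)" and kh: "khat \<ge> (CARD('m)+2)*k"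
    and c: "c \<in> joint_rank_k_nr khat A" and b: "b \<in> joint_rank_k_nr k A"
    and t: "0 \<le> t" "t \<le> 1"
  shows "(1-t) *\<^sub>R c + t *\<^sub>R b \<in> joint_rank_k_nr k A"
proof -
  obtain P where P: "rank_proj khat P" "\<forall>j x. P (A j (P x)) = complex_of_real (c $ j) *\<^sub>C P x"
    using c unfolding joint_rank_k_nr_def by auto
  obtain P' where P': "rank_proj k P'" "\<forall>j x. P' (A j (P' x)) = complex_of_real (b $ j) *\<^sub>C P' x"
    using b unfolding joint_rank_k_nr_def by auto
  have cl: "clinear (A j)" for j using sa[of j] unfolding selfadjoint_op_def bounded_clinear_op_def by auto
  have adjA: "cinner (A j x) y = cinner x (A j y)" for j x y using sa[of j] unfolding selfadjoint_op_def by auto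
  obtain w where w: "orthonormal w k" "\<forall>i<k. w i \<in> range P'"
    using build_ortho[OF P'(1), of "{}" k] by auto
  define V where "V = w ` {..<k} \<union> (\<Union>j. (\<lambda>i. A j (w i)) ` {..<k})"
  have fV: "finite V" unfolding V_def by auto
  have c1: "card (w ` {..<k}) \<le> k" using card_image_le[of "{..<k}" w] by simp
  have "card (\<Union>j. (\<lambda>i. A j (w i)) ` {..<k}) \<le> (\<Sum>j\<in>UNIV. card ((\<lambda>i. A j (w i)) ` {..<k}))"
    by (rule card_UN_le) simp
  also have "\<dots> \<le> (\<Sum>j\<in>(UNIV::'m set). k)"
    by (intro sum_mono) (metis card_image_le card_lessThan finite_lessThan)
  also have "\<dots> = CARD('m) * k" by simp
  finally have c2: "card (\<Union>j. (\<lambda>i. A j (w i)) ` {..<k}) \<le> CARD('m) * k" .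
  have "card V \<le> k + CARD('m) * k" unfolding V_def
    using card_Un_le[of "w ` {..<k}" "\<Union>j. (\<lambda>i. A j (w i)) ` {..<k}"] c1 c2 by linarith
  hence cV: "card V + k \<le> khat" using kh by (simp add: algebra_simps)
  obtain u where u: "orthonormal u k" "\<forall>i<k. u i \<in> range P \<and> (\<forall>v\<in>V. cinner v (u i) = 0)"
    using build_ortho[OF P(1) fV cV] by auto
  define s1 where "s1 = sqrt (1-t)"
  define s2 where "s2 = sqrt t"
  have s11: "s1 * s1 = 1 - t" unfolding s1_def using t by simp
  have s22: "s2 * s2 = t" unfolding s2_def using t by simp
  define x where "x = (\<lambda>i. complex_of_real s1 *\<^sub>C u i + complex_of_real s2 *\<^sub>C w i)"
  have wu: "cinner (w i) (u l) = 0" if "i < k" "l < k" for i l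
    using u(2) that unfolding V_def by auto
  have uw: "cinner (u i) (w l) = 0" if "i < k" "l < k" for i l
    by (metis wu[OF that(2) that(1)] cinner_commute complex_cnj_zero)
  have uAw: "cinner (u i) (A j (w l)) = 0" if "i < k" "l < k" for i l j
  proof -
    have "cinner (A j (w l)) (u i) = 0" using u(2) that unfolding V_def by blast
    thus ?thesis by (metis cinner_commute complex_cnj_zero)
  qed
  have wAu: "cinner (w i) (A j (u l)) = 0" if "i < k" "l < k" for i l j
  proof -
    have "cinner (A j (w i)) (u l) = 0" using u(2) that unfolding V_def by blast
    thus ?thesis by (simp add: adjA)
  qed
  have ortho: "orthonormal x k" unfolding orthonormal_def
  proof (intro allI impI)
    fix i l assume i: "i < k" and l: "l < k"
    have "cinner (x i) (x l) = complex_of_real (s1 * s1) * cinner (u i) (u l) + complex_of_real (s2 * s2) * cinner (w i) (w l)"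
      unfolding x_def cinner_expand using uw[OF i l] wu[OF i l] by simp
    also have "\<dots> = (if i = l then 1 else 0)"
      using u(1) w(1) i l unfolding orthonormal_def s11 s22 by auto
    finally show "cinner (x i) (x l) = (if i = l then 1 else 0)" .
  qed
  show ?thesis
  proof (rule from_ortho[OF ortho cl])
    fix j i l assume i: "i < k" and l: "l < k"
    have Ax: "A j (x l) = complex_of_real s1 *\<^sub>C A j (u l) + complex_of_real s2 *\<^sub>C A j (w l)"
      unfolding x_def by (simp add: clinear_add[OF cl] clinear_scaleC[OF cl])
    have uAu: "cinner (u i) (A j (u l)) = complex_of_real (c $ j) * cinner (u i) (u l)"
      using comp_range[OF P(1), of "A j" "complex_of_real (c $ j)"] P(2) u(2) i l by auto
    have wAw: "cinner (w i) (A j (w l)) = complex_of_real (b $ j) * cinner (w i) (w l)"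
      using comp_range[OF P'(1), of "A j" "complex_of_real (b $ j)"] P'(2) w(2) i l by auto
    have "cinner (x i) (A j (x l)) = complex_of_real (s1 * s1) * cinner (u i) (A j (u l)) + complex_of_real (s2 * s2) * cinner (w i) (A j (w l))"
      unfolding Ax unfolding x_def cinner_expand using uAw[OF i l] wAu[OF i l] by simp
    also have "\<dots> = (if i = l then complex_of_real (((1 - t) *\<^sub>R c + t *\<^sub>R b) $ j) else 0)"
      unfolding uAu wAw s11 s22 using u(1) w(1) i l unfolding orthonormal_def by (auto simp: algebra_simps)
    finally show "cinner (x i) (A j (x l)) = (if i = l then complex_of_real (((1 - t) *\<^sub>R c + t *\<^sub>R b) $ j) else 0)" .
  qed
qed

lemma lower:
  fixes A :: "'m::finite \<Rightarrow> 'a::complex_inner \<Rightarrow> 'a"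
  assumes sa: "\<And>j. selfadjoint_op (A j)" and kh: "k \<le> khat"
    and c: "c \<in> joint_rank_k_nr khat A"
  shows "c \<in> joint_rank_k_nr k A"
proof -
  obtain P where P: "rank_proj khat P" "\<forall>j x. P (A j (P x)) = complex_of_real (c $ j) *\<^sub>C P x"
    using c unfolding joint_rank_k_nr_def by auto
  have cl: "clinear (A j)" for j using sa[of j] unfolding selfadjoint_op_def bounded_clinear_op_def by auto
  obtain u where u: "orthonormal u k" "\<forall>i<k. u i \<in> range P"
    using build_ortho[OF P(1), of "{}" k] kh by auto
  show ?thesis
  proof (rule from_ortho[OF u(1) cl])
    fix j i l assume i: "i < k" and l: "l < k"
    have "cinner (u i) (A j (u l)) = complex_of_real (c $ j) * cinner (u i) (u l)"
      using comp_range[OF P(1), of "A j" "complex_of_real (c $ j)"] P(2) u(2) i l by auto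
    thus "cinner (u i) (A j (u l)) = (if i = l then complex_of_real (c $ j) else 0)"
      using u(1) i l unfolding orthonormal_def by auto
  qed
qed



lemma kernel_convex:
  fixes T :: "(real^'m) set"
  assumes c1: "star_center T c1" and c2: "star_center T c2" and l: "0 \<le> l" "l \<le> 1"
  shows "star_center T ((1-l) *\<^sub>R c1 + l *\<^sub>R c2)"
proof -
  define c where "c = (1-l) *\<^sub>R c1 + l *\<^sub>R c2"
  have cT: "c \<in> T"
  proof -
    have "c \<in> closed_segment c1 c2" unfolding c_def closed_segment_def using l by blast
    thus ?thesis using c1 c2 unfolding star_center_def by blast
  qed
  have "closed_segment c b \<subseteq> T" if bT: "b \<in> T" for b
  proof
    fix q assume "q \<in> closed_segment c b"
    then obtain s where s: "0 \<le> s" "s \<le> 1" "q = (1-s) *\<^sub>R c + s *\<^sub>R b"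
      unfolding closed_segment_def by blast
    define D where "D = (1-s)*(1-l) + s"
    show "q \<in> T"
    proof (cases "D = 0")
      case True
      have "(1-s)*(1-l) \<ge> 0" using s l by simp
      hence "s = 0" using True s unfolding D_def by linarith
      thus ?thesis using s cT by simp
    next
      case False
      have Dge: "D \<ge> s" unfolding D_def using s l by simp
      have D1: "D \<le> 1" unfolding D_def using s l by (simp add: algebra_simps mult_left_le)
      have Dp: "D > 0" using Dge s False by linarith
      define m where "m = s / D"
      have m: "0 \<le> m" "m \<le> 1" unfolding m_def using Dp Dge s by (auto simp: field_simps)
      have Dm: "D * m = s" unfolding m_def using Dp by simp
      define p where "p = (1-m) *\<^sub>R c1 + m *\<^sub>R b"
      have "p \<in> closed_segment c1 b" unfolding p_def closed_segment_def using m by blast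
      hence pT: "p \<in> T" using c1 bT unfolding star_center_def by blast
      have "q = (1-D) *\<^sub>R c2 + D *\<^sub>R p"
      proof -
        have "(1-D) *\<^sub>R c2 + D *\<^sub>R p = (1-D) *\<^sub>R c2 + (D - D*m) *\<^sub>R c1 + (D*m) *\<^sub>R b"
          unfolding p_def by (simp add: algebra_simps)
        also have "\<dots> = ((1-s)*l) *\<^sub>R c2 + ((1-s)*(1-l)) *\<^sub>R c1 + s *\<^sub>R b"
          unfolding Dm by (simp add: D_def algebra_simps)
        also have "\<dots> = q" unfolding s(3) c_def by (simp add: algebra_simps)
        finally show ?thesis by simp
      qed
      moreover have "(1-D) *\<^sub>R c2 + D *\<^sub>R p \<in> closed_segment c2 p"
        unfolding closed_segment_def using Dp D1 by auto
      ultimately show ?thesis using c2 pT unfolding star_center_def by blast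
    qed
  qed
  thus ?thesis using cT unfolding star_center_def c_def by blast
qed

lemma kernel_convex_set: "convex {c. star_center (T::(real^'m) set) c}"
  unfolding convex_def
proof (intro allI ballI impI, simp only: mem_Collect_eq)
  fix x y :: "real^'m" and u v :: real
  assume "star_center T x" "star_center T y" "0 \<le> u" "0 \<le> v" "u + v = 1"
  thus "star_center T (u *\<^sub>R x + v *\<^sub>R y)"
    using kernel_convex[of T x y v] by (simp add: eq_diff_eq[symmetric])
qed



theorem corollary3p2:
  fixes A :: "'m::finite \<Rightarrow> 'a::{complex_inner, complete_space} \<Rightarrow> 'a"
    and k khat :: nat
  assumes "\<And>j. selfadjoint_op (A j)"
    and "k > 0"
    and "khat \<ge> (CARD('m) + 2) * k"
    and "closure (joint_rank_k_nr khat A) \<noteq> {}"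
  shows "star_shaped (closure (joint_rank_k_nr k A))
    \<and> convex hull (closure (joint_rank_k_nr khat A)) \<subseteq> closure (joint_rank_k_nr k A)
    \<and> (\<forall>c \<in> convex hull (closure (joint_rank_k_nr khat A)).
          star_center (closure (joint_rank_k_nr k A)) c)"
proof -
  define L where "L = joint_rank_k_nr k A"
  define H where "H = joint_rank_k_nr khat A"
  define T where "T = closure L"
  have kk: "k \<le> khat" using assms(3) by (metis add_leE le_trans mult_le_mono1 mult_1 one_add_one add_2_eq_Suc' le_add2 trans_le_add2 nat_mult_le_cancel_disj)
  have HL: "H \<subseteq> L" unfolding H_def L_def using lower[of A, OF assms(1) kk] by blast
  have cT: "closed T" unfolding T_def by simp
  have a: "star_center T c" if c: "c \<in> H" for c
  proof -
    have "c \<in> T" using HL c closure_subset unfolding T_def by blast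
    moreover have "closed_segment c b \<subseteq> T" if b: "b \<in> T" for b
    proof
      fix q assume "q \<in> closed_segment c b"
      then obtain u where u: "0 \<le> u" "u \<le> 1" "q = (1-u) *\<^sub>R c + u *\<^sub>R b"
        unfolding closed_segment_def by blast
      define f where "f = (\<lambda>b. (1-u) *\<^sub>R c + u *\<^sub>R (b::real^'m))"
      have "continuous_on (closure L) f" unfolding f_def by (intro continuous_intros)
      moreover have "f ` L \<subseteq> T"
        using seg[of A, OF assms(1) assms(3), of c] c u closure_subset
        unfolding f_def T_def H_def L_def by blast
      ultimately have "f ` closure L \<subseteq> T" using image_closure_subset cT by blast
      thus "q \<in> T" using b u unfolding f_def T_def by auto
    qed
    ultimately show ?thesis unfolding star_center_def by blast
  qed
  have b: "star_center T c" if c: "c \<in> closure H" for c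
  proof -
    have "c \<in> T" using closure_mono[OF HL] c unfolding T_def by blast
    moreover have "closed_segment c b \<subseteq> T" if b: "b \<in> T" for b
    proof
      fix q assume "q \<in> closed_segment c b"
      then obtain u where u: "0 \<le> u" "u \<le> 1" "q = (1-u) *\<^sub>R c + u *\<^sub>R b"
        unfolding closed_segment_def by blast
      define g where "g = (\<lambda>c. (1-u) *\<^sub>R (c::real^'m) + u *\<^sub>R b)"
      have "continuous_on (closure H) g" unfolding g_def by (intro continuous_intros)
      moreover have "g ` H \<subseteq> T"
      proof
        fix z assume "z \<in> g ` H"
        then obtain c' where "c' \<in> H" "z = g c'" by auto
        thus "z \<in> T" using a[of c'] b u unfolding star_center_def closed_segment_def g_def by blast
      qed
      ultimately have "g ` closure H \<subseteq> T" using image_closure_subset cT by blast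
      thus "q \<in> T" using c u unfolding g_def by auto
    qed
    ultimately show ?thesis unfolding star_center_def by blast
  qed
  have hull: "convex hull (closure H) \<subseteq> {c. star_center T c}"
    by (rule hull_minimal) (use b kernel_convex_set in auto)
  have sub: "{c. star_center T c} \<subseteq> T" unfolding star_center_def by auto
  have ne: "closure H \<noteq> {}" using assms(4) unfolding H_def by simp
  then obtain c0 where "c0 \<in> closure H" by (meson ex_in_conv)
  hence "star_center T c0" using b by blast
  hence "star_shaped T" unfolding star_shaped_def by blast
  thus ?thesis using hull sub unfolding T_def L_def H_def by blast
qed

end
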